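(* Let $H$ and $J$ be complex Hilbert spaces with $H$ infinite dimensional, and let $T \in \mathcal{L}(H,J)$ be a compact operator. Then $T$ satisfies the property $\mathcal{N}^*$ if and only if $T$ is non-injective.
   Context: $\mathcal{L}(H,J)$ denotes the space of bounded linear operators from $H$ to $J$. For $T \in \mathcal{L}(H,J)$ put $[T] := \inf_{\|x\|_H = 1} \|Tx\|_J$. An operator $T \in \mathcal{L}(H,J)$ satisfies the property $\mathcal{N}^*$ if there exists $x_0 \in H$ with $\|x_0\|_H = 1$ such that $[T] = \|T x_0\|_J$. *)

theory Defs
  imports "HOL-Analysis.Analysis"
begin

text \<open>A complex Hilbert space is modelled as a real Hilbert space (type class
  real_inner + complete_space, inner product = real part of the complex one)
  together with an orthogonal complex structure iu (multiplication by the
  imaginary unit): real-linear, iu (iu x) = -x and norm-preserving.\<close>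

definition complex_structure :: "('a::real_normed_vector \<Rightarrow> 'a) \<Rightarrow> bool" where
  "complex_structure iu \<longleftrightarrow> linear iu \<and> (\<forall>x. iu (iu x) = - x) \<and> (\<forall>x. norm (iu x) = norm x)"

definition complex_linear_wrt ::
  "('a::real_normed_vector \<Rightarrow> 'a) \<Rightarrow> ('b::real_normed_vector \<Rightarrow> 'b) \<Rightarrow> ('a \<Rightarrow> 'b) \<Rightarrow> bool" where
  "complex_linear_wrt iH iJ T \<longleftrightarrow> linear T \<and> (\<forall>x. T (iH x) = iJ (T x))"

definition infinite_dimensional_space :: "'a::real_vector itself \<Rightarrow> bool" where
  "infinite_dimensional_space _ \<longleftrightarrow> (\<forall>B::'a set. finite B \<longrightarrow> span B \<noteq> UNIV)"

definition compact_operator :: "('a::real_normed_vector \<Rightarrow> 'b::real_normed_vector) \<Rightarrow> bool" where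
  "compact_operator T \<longleftrightarrow> bounded_linear T \<and> (\<forall>S. bounded S \<longrightarrow> compact (closure (T ` S)))"

definition min_modulus :: "('a::real_normed_vector \<Rightarrow> 'b::real_normed_vector) \<Rightarrow> real" where
  "min_modulus T = Inf ((\<lambda>x. norm (T x)) ` {x. norm x = 1})"

definition property_Nstar :: "('a::real_normed_vector \<Rightarrow> 'b::real_normed_vector) \<Rightarrow> bool" where
  "property_Nstar T \<longleftrightarrow> (\<exists>x0. norm x0 = 1 \<and> min_modulus T = norm (T x0))"

end

theory Submission
  imports Defs
begin

lemma orth_to_basis:
  fixes C :: "'a::real_inner set"
  assumes fC: "finite C" and po: "pairwise orthogonal C" and y: "y \<in> C"
  shows "(a - (\<Sum>b\<in>C. (a \<bullet> b / (b \<bullet> b)) *\<^sub>R b)) \<bullet> y = 0"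
proof -
  have "(\<Sum>b\<in>C. (a \<bullet> b / (b \<bullet> b)) *\<^sub>R b) \<bullet> y = (\<Sum>b\<in>C. (a \<bullet> b / (b \<bullet> b)) * (b \<bullet> y))"
    by (simp add: inner_sum_left)
  also have "\<dots> = (a \<bullet> y / (y \<bullet> y)) * (y \<bullet> y) + (\<Sum>b\<in>C-{y}. (a \<bullet> b / (b \<bullet> b)) * (b \<bullet> y))"
    by (rule sum.remove[OF fC y])
  also have "(\<Sum>b\<in>C-{y}. (a \<bullet> b / (b \<bullet> b)) * (b \<bullet> y)) = 0"
    using po y by (intro sum.neutral) (auto simp: pairwise_def orthogonal_def)
  also have "(a \<bullet> y / (y \<bullet> y)) * (y \<bullet> y) = a \<bullet> y"
    by (cases "y = 0") auto
  finally have h: "(\<Sum>b\<in>C. (a \<bullet> b / (b \<bullet> b)) *\<^sub>R b) \<bullet> y = a \<bullet> y" by simp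
  show ?thesis unfolding inner_diff_left h by simp
qed

lemma orth_exists:
  assumes inf: "infinite_dimensional_space TYPE('a::real_inner)"
    and fF: "finite (F::'a set)"
  shows "\<exists>u. norm u = 1 \<and> (\<forall>x\<in>F. u \<bullet> x = 0)"
proof -
  from inf fF have "span F \<noteq> UNIV" unfolding infinite_dimensional_space_def by blast
  then obtain a where a: "a \<notin> span F" by blast
  from basis_orthogonal[OF fF] obtain C where
    C: "finite C" "span C = span F" "pairwise orthogonal C" by blast
  let ?v = "a - (\<Sum>b\<in>C. (a \<bullet> b / (b \<bullet> b)) *\<^sub>R b)"
  have "(\<Sum>b\<in>C. (a \<bullet> b / (b \<bullet> b)) *\<^sub>R b) \<in> span C"
    by (intro span_sum span_scale span_base)
  hence sF: "(\<Sum>b\<in>C. (a \<bullet> b / (b \<bullet> b)) *\<^sub>R b) \<in> span F" using C(2) by simp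
  have v0: "?v \<noteq> 0"
  proof
    assume "?v = 0"
    hence "a = (\<Sum>b\<in>C. (a \<bullet> b / (b \<bullet> b)) *\<^sub>R b)" by simp
    with sF a show False by simp
  qed
  have vC: "?v \<bullet> x = 0" if "x \<in> span C" for x
  proof (rule span_induct[OF that])
    show "subspace {x. ?v \<bullet> x = 0}"
      unfolding subspace_def by (simp add: inner_add_right)
  next
    fix y assume "y \<in> C"
    then show "?v \<bullet> y = 0" using orth_to_basis[OF C(1) C(3)] by blast
  qed
  have vF: "?v \<bullet> x = 0" if "x \<in> F" for x
    using vC C(2) that by (simp add: span_base)
  show ?thesis
  proof (intro exI conjI ballI)
    show "norm (?v /\<^sub>R norm ?v) = 1" using v0 by simp
    fix x assume "x \<in> F"
    thus "(?v /\<^sub>R norm ?v) \<bullet> x = 0" using vF by simp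
  qed
qed


definition gsel :: "'a::real_inner set \<Rightarrow> 'a" where
  "gsel F = (SOME u. norm u = 1 \<and> (\<forall>x\<in>F. u \<bullet> x = 0))"

primrec Eset :: "nat \<Rightarrow> 'a::real_inner set" where
  "Eset 0 = {}"
| "Eset (Suc n) = insert (gsel (Eset n)) (Eset n)"

lemma Eset_finite: "finite (Eset n)"
  by (induct n) auto

lemma Eset_mono: "m < n \<Longrightarrow> gsel (Eset m) \<in> Eset n"
proof (induct n)
  case 0 then show ?case by simp
next
  case (Suc n) then show ?case by (cases "m = n") auto
qed

lemma gsel_prop:
  assumes "infinite_dimensional_space TYPE('a::real_inner)"
  shows "norm (gsel (Eset n :: 'a set)) = 1 \<and> (\<forall>x\<in>(Eset n :: 'a set). gsel (Eset n) \<bullet> x = 0)"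
  unfolding gsel_def by (rule someI_ex[OF orth_exists[OF assms Eset_finite]])

lemma no_lower_bound:
  fixes T :: "'a::real_inner \<Rightarrow> 'b::real_normed_vector"
  assumes inf: "infinite_dimensional_space TYPE('a)"
    and cT: "compact_operator T" and c: "c > 0"
    and lb: "\<And>x. c * norm x \<le> norm (T x)"
  shows False
proof -
  have blT: "bounded_linear T" using cT unfolding compact_operator_def by simp
  interpret bounded_linear T by (rule blT)
  define e where "e n = (gsel (Eset n) :: 'a)" for n
  have en: "norm (e n) = 1" for n
  proof -
    have "norm (gsel (Eset n :: 'a set)) = 1" using gsel_prop[OF inf] by blast
    thus ?thesis by (simp add: e_def)
  qed
  have eo: "e n \<bullet> e m = 0" if "m < n" for m n
  proof -
    have "\<forall>x\<in>(Eset n :: 'a set). gsel (Eset n) \<bullet> x = 0" using gsel_prop[OF inf] by blast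
    thus ?thesis using Eset_mono[OF that, where 'a='a] by (simp add: e_def)
  qed
  have ed: "1 \<le> norm (e a - e b)" if "b < a" for a b
  proof -
    have "(norm (e a - e b))^2 = 2"
    proof -
      have "e a \<bullet> e a = 1" "e b \<bullet> e b = 1" using en[of a] en[of b] by (simp_all add: dot_square_norm)
      thus ?thesis using eo[OF that]
        by (simp add: power2_norm_eq_inner inner_diff inner_commute)
    qed
    hence "1 \<le> (norm (e a - e b))^2" by simp
    thus ?thesis by (metis norm_ge_zero power2_le_imp_le power_one)
  qed
  have K: "compact (closure (T ` cball 0 1))"
    using cT unfolding compact_operator_def by simp
  have inK: "\<forall>n. T (e n) \<in> closure (T ` cball 0 1)"
    using en by (intro allI subsetD[OF closure_subset]) auto
  from spec[OF compact_imp_seq_compact[OF K, unfolded seq_compact_def], of "\<lambda>n. T (e n)"] inK obtain l r where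
    r: "strict_mono r" "((\<lambda>n. T (e n)) \<circ> r) \<longlonglongrightarrow> l"
    by blast
  have "Cauchy ((\<lambda>n. T (e n)) \<circ> r)" using r(2) by (rule LIMSEQ_imp_Cauchy)
  from CauchyD[OF this c] obtain M where
    M: "\<forall>m\<ge>M. \<forall>n\<ge>M. norm (((\<lambda>n. T (e n)) \<circ> r) m - ((\<lambda>n. T (e n)) \<circ> r) n) < c" by blast
  have lt: "r M < r (Suc M)" using r(1) by (simp add: strict_mono_def)
  have "norm (T (e (r (Suc M))) - T (e (r M))) < c" using M[rule_format, of "Suc M" M] by simp
  moreover have "c \<le> norm (T (e (r (Suc M))) - T (e (r M)))"
  proof -
    have "c \<le> c * norm (e (r (Suc M)) - e (r M))" using ed[OF lt] c by simp
    also have "\<dots> \<le> norm (T (e (r (Suc M)) - e (r M)))" by (rule lb)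
    finally show ?thesis by (simp add: diff)
  qed
  ultimately show False by simp
qed

theorem proposition1p2:
  fixes T :: "'a::{real_inner, complete_space} \<Rightarrow> 'b::{real_inner, complete_space}"
    and iH :: "'a \<Rightarrow> 'a" and iJ :: "'b \<Rightarrow> 'b"
  assumes "complex_structure iH" and "complex_structure iJ"
    and "infinite_dimensional_space TYPE('a)"
    and "bounded_linear T" and "complex_linear_wrt iH iJ T"
    and "compact_operator T"
  shows "property_Nstar T \<longleftrightarrow> \<not> inj T"
proof -
  interpret bounded_linear T by (rule assms(4))
  let ?V = "(\<lambda>x. norm (T x)) ` {x::'a. norm x = 1}"
  obtain u0 :: 'a where u0: "norm u0 = 1" using orth_exists[OF assms(3), of "{}"] by auto
  have ne: "?V \<noteq> {}" using u0 by auto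
  have bb: "bdd_below ?V" by (rule bdd_belowI[of _ 0]) auto
  have m0: "0 \<le> min_modulus T" unfolding min_modulus_def
    by (rule cInf_greatest[OF ne]) auto
  have mle: "min_modulus T \<le> norm (T x)" if "norm x = 1" for x
    unfolding min_modulus_def by (rule cInf_lower[OF _ bb]) (use that in auto)
  have mz: "min_modulus T = 0"
  proof (rule ccontr)
    assume "min_modulus T \<noteq> 0"
    with m0 have mp: "min_modulus T > 0" by simp
    have "min_modulus T * norm x \<le> norm (T x)" for x
    proof (cases "x = 0")
      case True then show ?thesis by simp
    next
      case False
      hence "min_modulus T \<le> norm (T (x /\<^sub>R norm x))" by (intro mle) simp
      also have "\<dots> = norm (T x) / norm x" by (simp add: scaleR divide_inverse_commute)
      finally show ?thesis using False by (simp add: field_simps)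
    qed
    from no_lower_bound[OF assms(3) assms(6) mp this] show False .
  qed
  show ?thesis
  proof
    assume "property_Nstar T"
    then obtain x0 where x0: "norm x0 = 1" "min_modulus T = norm (T x0)"
      unfolding property_Nstar_def by blast
    hence "T x0 = T 0" using mz by (simp add: zero)
    moreover have "x0 \<noteq> 0" using x0 by auto
    ultimately show "\<not> inj T" by (meson injD)
  next
    assume "\<not> inj T"
    then obtain x y where xy: "x \<noteq> y" "T x = T y" unfolding inj_def by blast
    define z where "z = x - y"
    have z0: "z \<noteq> 0" and Tz: "T z = 0" using xy by (auto simp: z_def diff)
    show "property_Nstar T" unfolding property_Nstar_def
      by (rule exI[of _ "z /\<^sub>R norm z"]) (use z0 Tz mz in \<open>simp add: scaleR\<close>)
  qed
qed

end
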